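(* Let $A$ be a unital C*-algebra and let $pMO(A)$ be the locale presented by the site $\mathcal{C}(A)\ltimes\Sigma$ described in the context. Then the points of $pMO(A)$ are in one-to-one correspondence with the consistent ideals of partial measurement outcomes of $A$. Explicitly: a point $\tau$ (completely prime filter) corresponds to the family indexed by $I_\tau=\{C\in\mathcal{C}(A) : (C,\Sigma(C))\in\tau\}$, where for $C\in I_\tau$ the character $\sigma_C\in\Sigma(C)$ is the unique character with $\{u : (C,u)\in\tau\}=\{u\in\mathcal{O}(\Sigma(C)) : \sigma_C\in u\}$; conversely, a consistent ideal $(C_i,\sigma_i)_{i}$ corresponds to the point $\{(C_i,u) : \sigma_i\in u\}$.
   Context: Work classically in Sets. $A$ is a unital C*-algebra; $\mathcal{C}(A)$ denotes the set of commutative unital C*-subalgebras of $A$, partially ordered by inclusion. For $C\in\mathcal{C}(A)$, $\Sigma(C)$ is its Gelfand spectrum (the compact Hausdorff space of characters of $C$) and $\mathcal{O}(\Sigma(C))$ its lattice of open sets. For $C\subseteq D$ in $\mathcal{C}(A)$, $r_{D,C}:\Sigma(D)\to\Sigma(C)$ is restriction of characters (continuous). The site $\mathcal{C}(A)\ltimes\Sigma$: objects are pairs $(C,u)$ with $C\in\mathcal{C}(A)$, $u\in\mathcal{O}(\Sigma(C))$; order $(D,v)\le(C,u)$ iff $C\subseteq D$ and $v\subseteq r_{D,C}^{-1}(u)$; covering relation $(C,u)\lhd\{(D_i,v_i)\}_{i\in I}$ iff $C\subseteq D_i$ for all $i$ and $u\subseteq\bigcup\{v_i : i\in I, D_i=C\}$.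 The locale presented by such a site has as frame the down-closed subsets $U$ of the poset such that $x\lhd S\subseteq U$ implies $x\in U$. A point of it is a completely prime filter: an inhabited, up-closed subset $\tau$ such that any two elements of $\tau$ have a common lower bound in $\tau$, and whenever $x\in\tau$ and $x\lhd S$ then $S\cap\tau\neq\emptyset$. A partial measurement outcome is a pair $(C,\sigma)$ with $C\in\mathcal{C}(A)$ and $\sigma\in\Sigma(C)$. A consistent ideal of partial measurement outcomes is a family $(C_i,\sigma_i)_{i}$ of partial measurement outcomes such that $\{C_i\}$ is an ideal of $\mathcal{C}(A)$ (nonempty, down-closed, and directed under inclusion), each $C_i$ occurs with exactly one $\sigma_i$, and $C_i\subseteq C_j$ implies $\sigma_i=\sigma_j|_{C_i}$. *)

theory Defs
  imports "HOL-Analysis.Analysis"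
begin

text \<open>A unital C*-algebra: the type 'a carries a (real) Banach algebra structure with unit,
  together with an explicit complex scalar multiplication smc and an involution star.\<close>

definition cstar_alg ::
  "(complex \<Rightarrow> 'a::{real_normed_algebra,ring_1,banach} \<Rightarrow> 'a) \<Rightarrow> ('a \<Rightarrow> 'a) \<Rightarrow> bool" where
  "cstar_alg smc star \<longleftrightarrow>
     (\<forall>c x y. smc c (x + y) = smc c x + smc c y) \<and>
     (\<forall>c d x. smc (c + d) x = smc c x + smc d x) \<and>
     (\<forall>c d x. smc (c * d) x = smc c (smc d x)) \<and>
     (\<forall>r x. smc (complex_of_real r) x = scaleR r x) \<and>
     (\<forall>c x y. smc c (x * y) = smc c x * y \<and> smc c (x * y) = x * smc c y) \<and>
     (\<forall>c x. norm (smc c x) = cmod c * norm x) \<and>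
     (\<forall>x y. star (x + y) = star x + star y) \<and>
     (\<forall>c x. star (smc c x) = smc (cnj c) (star x)) \<and>
     (\<forall>x y. star (x * y) = star y * star x) \<and>
     (\<forall>x. star (star x) = x) \<and>
     (\<forall>x. norm (star x * x) = (norm x)\<^sup>2)"

definition comm_subalg ::
  "(complex \<Rightarrow> 'a::{real_normed_algebra,ring_1,banach} \<Rightarrow> 'a) \<Rightarrow> ('a \<Rightarrow> 'a) \<Rightarrow> 'a set \<Rightarrow> bool" where
  "comm_subalg smc star C \<longleftrightarrow>
     1 \<in> C \<and>
     (\<forall>x\<in>C. \<forall>y\<in>C. x + y \<in> C \<and> x * y \<in> C \<and> x * y = y * x) \<and>
     (\<forall>c. \<forall>x\<in>C. smc c x \<in> C) \<and>
     (\<forall>x\<in>C. star x \<in> C) \<and>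
     closed C"

definition CA ::
  "(complex \<Rightarrow> 'a::{real_normed_algebra,ring_1,banach} \<Rightarrow> 'a) \<Rightarrow> ('a \<Rightarrow> 'a) \<Rightarrow> 'a set set" where
  "CA smc star = {C. comm_subalg smc star C}"

text \<open>Gelfand spectrum: characters (nonzero, i.e. unital, multiplicative complex-linear
  functionals) of C, represented as functions extensional on C.\<close>
definition Spec ::
  "(complex \<Rightarrow> 'a::{real_normed_algebra,ring_1,banach} \<Rightarrow> 'a) \<Rightarrow> 'a set \<Rightarrow> ('a \<Rightarrow> complex) set" where
  "Spec smc C = {\<sigma>. \<sigma> \<in> extensional C \<and> \<sigma> 1 = 1 \<and>
      (\<forall>x\<in>C. \<forall>y\<in>C. \<sigma> (x + y) = \<sigma> x + \<sigma> y \<and> \<sigma> (x * y) = \<sigma> x * \<sigma> y) \<and>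
      (\<forall>c. \<forall>x\<in>C. \<sigma> (smc c x) = c * \<sigma> x)}"

text \<open>Gelfand (weak-*) topology: pointwise convergence on C.\<close>
definition SpecTop ::
  "(complex \<Rightarrow> 'a::{real_normed_algebra,ring_1,banach} \<Rightarrow> 'a) \<Rightarrow> 'a set \<Rightarrow> ('a \<Rightarrow> complex) topology" where
  "SpecTop smc C = subtopology (product_topology (\<lambda>_. euclidean) C) (Spec smc C)"

definition restr :: "'a set \<Rightarrow> ('a \<Rightarrow> complex) \<Rightarrow> ('a \<Rightarrow> complex)" where
  "restr C \<sigma> = restrict \<sigma> C"

definition site_el ::
  "(complex \<Rightarrow> 'a::{real_normed_algebra,ring_1,banach} \<Rightarrow> 'a) \<Rightarrow> ('a \<Rightarrow> 'a)
    \<Rightarrow> ('a set \<times> ('a \<Rightarrow> complex) set) set" where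
  "site_el smc star = {(C, u). C \<in> CA smc star \<and> openin (SpecTop smc C) u}"

definition site_le ::
  "(complex \<Rightarrow> 'a::{real_normed_algebra,ring_1,banach} \<Rightarrow> 'a)
    \<Rightarrow> ('a set \<times> ('a \<Rightarrow> complex) set) \<Rightarrow> ('a set \<times> ('a \<Rightarrow> complex) set) \<Rightarrow> bool" where
  "site_le smc x y \<longleftrightarrow> (case x of (D, v) \<Rightarrow> case y of (C, u) \<Rightarrow>
      C \<subseteq> D \<and> v \<subseteq> {\<sigma> \<in> Spec smc D. restr C \<sigma> \<in> u})"

definition covers ::
  "('a set \<times> ('a \<Rightarrow> complex) set) \<Rightarrow> ('a set \<times> ('a \<Rightarrow> complex) set) set \<Rightarrow> bool" where
  "covers x S \<longleftrightarrow> (case x of (C, u) \<Rightarrow>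
      (\<forall>(D, v)\<in>S. C \<subseteq> D) \<and> u \<subseteq> \<Union>{v. (C, v) \<in> S})"

text \<open>Points of pMO(A): completely prime filters on the site.\<close>
definition is_point ::
  "(complex \<Rightarrow> 'a::{real_normed_algebra,ring_1,banach} \<Rightarrow> 'a) \<Rightarrow> ('a \<Rightarrow> 'a)
    \<Rightarrow> ('a set \<times> ('a \<Rightarrow> complex) set) set \<Rightarrow> bool" where
  "is_point smc star \<tau> \<longleftrightarrow>
     \<tau> \<subseteq> site_el smc star \<and> \<tau> \<noteq> {} \<and>
     (\<forall>x\<in>\<tau>. \<forall>y\<in>site_el smc star. site_le smc x y \<longrightarrow> y \<in> \<tau>) \<and>
     (\<forall>x\<in>\<tau>. \<forall>y\<in>\<tau>. \<exists>z\<in>\<tau>. site_le smc z x \<and> site_le smc z y) \<and>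
     (\<forall>x\<in>\<tau>. \<forall>S. S \<subseteq> site_el smc star \<and> covers x S \<longrightarrow> S \<inter> \<tau> \<noteq> {})"

text \<open>Consistent ideals of partial measurement outcomes, as sets of pairs (C, \<sigma>).\<close>
definition consistent_ideal ::
  "(complex \<Rightarrow> 'a::{real_normed_algebra,ring_1,banach} \<Rightarrow> 'a) \<Rightarrow> ('a \<Rightarrow> 'a)
    \<Rightarrow> ('a set \<times> ('a \<Rightarrow> complex)) set \<Rightarrow> bool" where
  "consistent_ideal smc star P \<longleftrightarrow>
     (\<forall>(C, \<sigma>)\<in>P. C \<in> CA smc star \<and> \<sigma> \<in> Spec smc C) \<and>
     fst ` P \<noteq> {} \<and>
     (\<forall>C\<in>fst ` P. \<forall>C'\<in>CA smc star. C' \<subseteq> C \<longrightarrow> C' \<in> fst ` P) \<and>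
     (\<forall>C\<in>fst ` P. \<forall>C'\<in>fst ` P. \<exists>D\<in>fst ` P. C \<subseteq> D \<and> C' \<subseteq> D) \<and>
     (\<forall>C \<sigma> \<sigma>'. (C, \<sigma>) \<in> P \<and> (C, \<sigma>') \<in> P \<longrightarrow> \<sigma> = \<sigma>') \<and>
     (\<forall>(C, \<sigma>)\<in>P. \<forall>(D, \<rho>)\<in>P. C \<subseteq> D \<longrightarrow> \<sigma> = restr C \<rho>)"

definition point_to_ideal ::
  "(complex \<Rightarrow> 'a::{real_normed_algebra,ring_1,banach} \<Rightarrow> 'a) \<Rightarrow> ('a \<Rightarrow> 'a)
    \<Rightarrow> ('a set \<times> ('a \<Rightarrow> complex) set) set \<Rightarrow> ('a set \<times> ('a \<Rightarrow> complex)) set" where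
  "point_to_ideal smc star \<tau> = {(C, \<sigma>). C \<in> CA smc star \<and> (C, Spec smc C) \<in> \<tau> \<and>
      \<sigma> \<in> Spec smc C \<and> {u. (C, u) \<in> \<tau>} = {u. openin (SpecTop smc C) u \<and> \<sigma> \<in> u}}"

definition ideal_to_point ::
  "(complex \<Rightarrow> 'a::{real_normed_algebra,ring_1,banach} \<Rightarrow> 'a)
    \<Rightarrow> ('a set \<times> ('a \<Rightarrow> complex)) set \<Rightarrow> ('a set \<times> ('a \<Rightarrow> complex) set) set" where
  "ideal_to_point smc P = {(C, u). \<exists>\<sigma>. (C, \<sigma>) \<in> P \<and> openin (SpecTop smc C) u \<and> \<sigma> \<in> u}"

end

theory Submission imports Defs begin

lemma topspace_SpecTop[simp]: "topspace (SpecTop smc C) = Spec smc C"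
  unfolding SpecTop_def by (auto simp: Spec_def PiE_def)

lemma Hausdorff_SpecTop: "Hausdorff_space (SpecTop smc C)"
  unfolding SpecTop_def
  by (rule Hausdorff_space_subtopology) (metis Hausdorff_space_euclidean Hausdorff_space_product_topology)

lemma restr_id: "\<sigma> \<in> Spec smc C \<Longrightarrow> restr C \<sigma> = \<sigma>"
  unfolding restr_def Spec_def by (auto simp: restrict_def extensional_def)

lemma restr_Spec:
  assumes "C \<in> CA smc star" "C \<subseteq> D" "\<sigma> \<in> Spec smc D"
  shows "restr C \<sigma> \<in> Spec smc C"
  using assms unfolding restr_def Spec_def CA_def comm_subalg_def
  by (auto simp: subset_iff)

lemma restr_cont:
  assumes "C \<in> CA smc star" "C \<subseteq> D"
  shows "continuous_map (SpecTop smc D) (SpecTop smc C) (restr C)"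
proof -
  have "continuous_map (SpecTop smc D) (product_topology (\<lambda>_. euclidean) C) (restr C)"
    unfolding continuous_map_componentwise
  proof
    show "restr C ` topspace (SpecTop smc D) \<subseteq> extensional C" by (auto simp: restr_def)
    show "\<forall>k\<in>C. continuous_map (SpecTop smc D) euclidean (\<lambda>x. restr C x k)"
    proof
      fix k assume k: "k \<in> C"
      then have "k \<in> D" using assms by auto
      have "continuous_map (SpecTop smc D) euclidean (\<lambda>x. x k)"
        unfolding SpecTop_def
        by (rule continuous_map_from_subtopology, rule continuous_map_product_projection) fact
      moreover have "\<And>x. restr C x k = x k" using k by (simp add: restr_def)
      ultimately show "continuous_map (SpecTop smc D) euclidean (\<lambda>x. restr C x k)" by simp
    qed
  qed
  then show ?thesis
    unfolding SpecTop_def[of smc C] continuous_map_in_subtopology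
    using restr_Spec[OF assms] by (auto simp: SpecTop_def[of smc D])
qed

lemma restr_preimage_open:
  assumes "C \<in> CA smc star" "C \<subseteq> D" "openin (SpecTop smc C) u"
  shows "openin (SpecTop smc D) {\<sigma> \<in> Spec smc D. restr C \<sigma> \<in> u}"
  using openin_continuous_map_preimage[OF restr_cont[OF assms(1,2)] assms(3)] by simp


lemma T0_SpecTop:
  assumes "\<sigma> \<in> Spec smc C" "\<rho> \<in> Spec smc C" "\<sigma> \<noteq> \<rho>"
  shows "\<exists>u. openin (SpecTop smc C) u \<and> \<rho> \<in> u \<and> \<sigma> \<notin> u"
  using Hausdorff_SpecTop[of smc C] assms unfolding Hausdorff_space_def
  by (metis disjnt_iff topspace_SpecTop)

lemma Spec_eq_by_nbhds:
  assumes "\<sigma> \<in> Spec smc C" "\<rho> \<in> Spec smc C"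
    and "\<And>u. openin (SpecTop smc C) u \<Longrightarrow> \<rho> \<in> u \<Longrightarrow> \<sigma> \<in> u"
  shows "\<sigma> = \<rho>"
  using T0_SpecTop[OF assms(1,2)] assms(3) by blast

lemma point_up:
  assumes "is_point smc star \<tau>" "(D, v) \<in> \<tau>" "C \<in> CA smc star" "openin (SpecTop smc C) u"
    "C \<subseteq> D" "v \<subseteq> {\<sigma> \<in> Spec smc D. restr C \<sigma> \<in> u}"
  shows "(C, u) \<in> \<tau>"
proof -
  have up: "\<forall>x\<in>\<tau>. \<forall>y\<in>site_el smc star. site_le smc x y \<longrightarrow> y \<in> \<tau>"
    using assms(1) by (simp add: is_point_def)
  have "(C,u) \<in> site_el smc star" using assms(3,4) by (simp add: site_el_def)
  moreover have "site_le smc (D,v) (C,u)" using assms(5,6) by (simp add: site_le_def)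
  ultimately show ?thesis using up assms(2) by blast
qed

lemma point_el:
  assumes "is_point smc star \<tau>" "(C, u) \<in> \<tau>"
  shows "C \<in> CA smc star" "openin (SpecTop smc C) u"
  using assms unfolding is_point_def site_el_def by auto

lemma point_top:
  assumes "is_point smc star \<tau>" "(C, u) \<in> \<tau>"
  shows "(C, Spec smc C) \<in> \<tau>"
proof -
  have "u \<subseteq> Spec smc C" using openin_subset[OF point_el(2)[OF assms]] by simp
  moreover have "Spec smc C \<subseteq> {\<sigma> \<in> Spec smc C. restr C \<sigma> \<in> Spec smc C}" by (auto simp: restr_id)
  moreover have "openin (SpecTop smc C) (Spec smc C)"
    using openin_topspace[of "SpecTop smc C"] by simp
  ultimately show ?thesis
    using point_up[OF assms(1,2) point_el(1)[OF assms]] by blast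
qed

lemma point_empty:
  assumes "is_point smc star \<tau>"
  shows "(C, {}) \<notin> \<tau>"
proof
  assume a: "(C, {}) \<in> \<tau>"
  have "covers (C, {}) {}" by (simp add: covers_def)
  moreover have "({}::('a set \<times> ('a \<Rightarrow> complex) set) set) \<subseteq> site_el smc star" by simp
  ultimately have "{} \<inter> \<tau> \<noteq> {}" using assms a unfolding is_point_def by blast
  then show False by simp
qed

lemma point_Int:
  assumes "is_point smc star \<tau>" "(C, u) \<in> \<tau>" "(C, v) \<in> \<tau>"
  shows "(C, u \<inter> v) \<in> \<tau>"
proof -
  obtain z where z: "z \<in> \<tau>" "site_le smc z (C, u)" "site_le smc z (C, v)"
    using assms unfolding is_point_def by blast
  obtain E w where zz: "z = (E, w)" by force
  show ?thesis
    apply (rule point_up[OF assms(1) z(1)[unfolded zz] point_el(1)[OF assms(1,2)]])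
    using z zz point_el[OF assms(1,2)] point_el[OF assms(1,3)]
    by (auto simp: site_le_def)
qed

lemma point_prime:
  assumes "is_point smc star \<tau>" "(C, u) \<in> \<tau>" "\<forall>v\<in>V. openin (SpecTop smc C) v" "u \<subseteq> \<Union>V"
  shows "\<exists>v\<in>V. (C, v) \<in> \<tau>"
proof -
  let ?S = "(\<lambda>v. (C, v)) ` V"
  have "?S \<subseteq> site_el smc star" using assms point_el[OF assms(1,2)] by (auto simp: site_el_def)
  moreover have eq: "{v. (C, v) \<in> ?S} = V" by auto
  moreover have "covers (C, u) ?S" using assms(4) eq unfolding covers_def by auto
  ultimately have "?S \<inter> \<tau> \<noteq> {}" using assms(1,2) unfolding is_point_def by blast
  then show ?thesis by auto
qed

lemma point_sober:
  assumes "is_point smc star \<tau>" "(C, Spec smc C) \<in> \<tau>"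
  shows "\<exists>\<sigma>\<in>Spec smc C. {u. (C, u) \<in> \<tau>} = {u. openin (SpecTop smc C) u \<and> \<sigma> \<in> u}"
proof -
  define V where "V = {v. openin (SpecTop smc C) v \<and> (C, v) \<notin> \<tau>}"
  define W where "W = \<Union>V"
  have Wnot: "\<not> u \<subseteq> W" if uin: "(C, u) \<in> \<tau>" for u
  proof
    assume "u \<subseteq> W"
    then obtain v where "v \<in> V" "(C, v) \<in> \<tau>"
      using point_prime[OF assms(1) uin, of V] unfolding V_def W_def by blast
    then show False unfolding V_def by blast
  qed
  obtain \<sigma> where s: "\<sigma> \<in> Spec smc C" "\<sigma> \<notin> W"
    using Wnot[OF assms(2)] by blast
  have inW: "(C, u) \<in> \<tau>" if "openin (SpecTop smc C) u" "\<sigma> \<in> u" for u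
  proof (rule ccontr)
    assume "(C, u) \<notin> \<tau>"
    then have "u \<in> V" using that(1) unfolding V_def by blast
    then have "\<sigma> \<in> W" using that(2) unfolding W_def by blast
    then show False using s(2) by blast
  qed
  have "{u. (C, u) \<in> \<tau>} = {u. openin (SpecTop smc C) u \<and> \<sigma> \<in> u}"
  proof (intro set_eqI iffI)
    fix u assume "u \<in> {u. openin (SpecTop smc C) u \<and> \<sigma> \<in> u}"
    then show "u \<in> {u. (C, u) \<in> \<tau>}" using inW by blast
  next
    fix u assume u: "u \<in> {u. (C, u) \<in> \<tau>}"
    then have uu: "(C, u) \<in> \<tau>" by simp
    have uo: "openin (SpecTop smc C) u" using point_el(2)[OF assms(1) uu] .
    have "\<sigma> \<in> u"
    proof (rule ccontr)
      assume nu: "\<sigma> \<notin> u"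
      have "u \<subseteq> W"
      proof
        fix \<rho> assume r: "\<rho> \<in> u"
        then have rS: "\<rho> \<in> Spec smc C" using openin_subset[OF uo] by auto
        have ne: "\<sigma> \<noteq> \<rho>" using r nu by auto
        have "\<exists>U V. openin (SpecTop smc C) U \<and> openin (SpecTop smc C) V \<and> \<sigma> \<in> U \<and> \<rho> \<in> V \<and> disjnt U V"
          using Hausdorff_SpecTop[of smc C] s(1) rS ne unfolding Hausdorff_space_def topspace_SpecTop
          by blast
        then obtain U V' where UV: "openin (SpecTop smc C) U" "openin (SpecTop smc C) V'"
          "\<sigma> \<in> U" "\<rho> \<in> V'" "disjnt U V'" by blast
        have U: "(C, U) \<in> \<tau>" using inW UV(1,3) by blast
        have e: "U \<inter> V' = {}" using UV(5) by (simp add: disjnt_def)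
        have "(C, V') \<notin> \<tau>"
        proof
          assume "(C, V') \<in> \<tau>"
          then have "(C, U \<inter> V') \<in> \<tau>" using point_Int[OF assms(1) U] by blast
          then show False using e point_empty[OF assms(1)] by simp
        qed
        then have "V' \<in> V" using UV(2) unfolding V_def by blast
        then show "\<rho> \<in> W" using UV(4) unfolding W_def by blast
      qed
      then show False using Wnot[OF uu] by blast
    qed
    then show "u \<in> {u. openin (SpecTop smc C) u \<and> \<sigma> \<in> u}" using uo by blast
  qed
  then show ?thesis using s by blast
qed


lemma ci_D:
  assumes "consistent_ideal smc star P"
  shows ci_el: "\<And>C \<sigma>. (C, \<sigma>) \<in> P \<Longrightarrow> C \<in> CA smc star \<and> \<sigma> \<in> Spec smc C"
    and ci_ne: "\<exists>C \<sigma>. (C, \<sigma>) \<in> P"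
    and ci_dc: "\<And>D \<rho> C. (D, \<rho>) \<in> P \<Longrightarrow> C \<in> CA smc star \<Longrightarrow> C \<subseteq> D \<Longrightarrow> \<exists>\<sigma>. (C, \<sigma>) \<in> P"
    and ci_dir: "\<And>C \<sigma> C' \<sigma>'. (C, \<sigma>) \<in> P \<Longrightarrow> (C', \<sigma>') \<in> P \<Longrightarrow> \<exists>D \<rho>. (D, \<rho>) \<in> P \<and> C \<subseteq> D \<and> C' \<subseteq> D"
    and ci_un: "\<And>C \<sigma> \<sigma>'. (C, \<sigma>) \<in> P \<Longrightarrow> (C, \<sigma>') \<in> P \<Longrightarrow> \<sigma> = \<sigma>'"
    and ci_cons: "\<And>C \<sigma> D \<rho>. (C, \<sigma>) \<in> P \<Longrightarrow> (D, \<rho>) \<in> P \<Longrightarrow> C \<subseteq> D \<Longrightarrow> \<sigma> = restr C \<rho>"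
proof -
  note a = assms[unfolded consistent_ideal_def]
  have a1: "\<forall>(C, \<sigma>)\<in>P. C \<in> CA smc star \<and> \<sigma> \<in> Spec smc C" using a by (rule conjunct1)
  have a2: "fst ` P \<noteq> {}" using a by (rule conjunct2[THEN conjunct1])
  have a3: "\<forall>C\<in>fst ` P. \<forall>C'\<in>CA smc star. C' \<subseteq> C \<longrightarrow> C' \<in> fst ` P"
    using a by (rule conjunct2[THEN conjunct2, THEN conjunct1])
  have a4: "\<forall>C\<in>fst ` P. \<forall>C'\<in>fst ` P. \<exists>D\<in>fst ` P. C \<subseteq> D \<and> C' \<subseteq> D"
    using a by (rule conjunct2[THEN conjunct2, THEN conjunct2, THEN conjunct1])
  have a5: "\<forall>C \<sigma> \<sigma>'. (C, \<sigma>) \<in> P \<and> (C, \<sigma>') \<in> P \<longrightarrow> \<sigma> = \<sigma>'"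
    using a by (rule conjunct2[THEN conjunct2, THEN conjunct2, THEN conjunct2, THEN conjunct1])
  have a6: "\<forall>(C, \<sigma>)\<in>P. \<forall>(D, \<rho>)\<in>P. C \<subseteq> D \<longrightarrow> \<sigma> = restr C \<rho>"
    using a by (rule conjunct2[THEN conjunct2, THEN conjunct2, THEN conjunct2, THEN conjunct2])
  show "\<And>C \<sigma>. (C, \<sigma>) \<in> P \<Longrightarrow> C \<in> CA smc star \<and> \<sigma> \<in> Spec smc C"
  proof -
    fix C \<sigma> assume "(C, \<sigma>) \<in> P"
    from a1[rule_format, OF this] show "C \<in> CA smc star \<and> \<sigma> \<in> Spec smc C" by simp
  qed
  show "\<exists>C \<sigma>. (C, \<sigma>) \<in> P"
  proof -
    obtain x where "x \<in> P" using a2 by blast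
    then show ?thesis by (metis prod.collapse)
  qed
  show "\<And>D \<rho> C. (D, \<rho>) \<in> P \<Longrightarrow> C \<in> CA smc star \<Longrightarrow> C \<subseteq> D \<Longrightarrow> \<exists>\<sigma>. (C, \<sigma>) \<in> P"
  proof -
    fix D \<rho> C assume h: "(D, \<rho>) \<in> P" "C \<in> CA smc star" "C \<subseteq> D"
    have "D \<in> fst ` P" using h(1) by (rule rev_image_eqI) simp
    then have "C \<in> fst ` P" using a3 h(2,3) by blast
    then obtain y where "y \<in> P" "C = fst y" by blast
    then show "\<exists>\<sigma>. (C, \<sigma>) \<in> P" by (metis prod.collapse)
  qed
  show "\<And>C \<sigma> C' \<sigma>'. (C, \<sigma>) \<in> P \<Longrightarrow> (C', \<sigma>') \<in> P \<Longrightarrow> \<exists>D \<rho>. (D, \<rho>) \<in> P \<and> C \<subseteq> D \<and> C' \<subseteq> D"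
  proof -
    fix C \<sigma> C' \<sigma>' assume h: "(C, \<sigma>) \<in> P" "(C', \<sigma>') \<in> P"
    have "C \<in> fst ` P" using h(1) by (rule rev_image_eqI) simp
    moreover have "C' \<in> fst ` P" using h(2) by (rule rev_image_eqI) simp
    ultimately have "\<exists>D\<in>fst ` P. C \<subseteq> D \<and> C' \<subseteq> D" using a4 by blast
    then obtain y where y: "y \<in> P" "C \<subseteq> fst y" "C' \<subseteq> fst y" by blast
    have "(fst y, snd y) \<in> P" using y(1) by simp
    then show "\<exists>D \<rho>. (D, \<rho>) \<in> P \<and> C \<subseteq> D \<and> C' \<subseteq> D" using y(2,3) by blast
  qed
  show "\<And>C \<sigma> \<sigma>'. (C, \<sigma>) \<in> P \<Longrightarrow> (C, \<sigma>') \<in> P \<Longrightarrow> \<sigma> = \<sigma>'" using a5 by blast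
  show "\<And>C \<sigma> D \<rho>. (C, \<sigma>) \<in> P \<Longrightarrow> (D, \<rho>) \<in> P \<Longrightarrow> C \<subseteq> D \<Longrightarrow> \<sigma> = restr C \<rho>"
  proof -
    fix C \<sigma> D \<rho> assume h: "(C, \<sigma>) \<in> P" "(D, \<rho>) \<in> P" "C \<subseteq> D"
    have "\<forall>(D, \<rho>)\<in>P. C \<subseteq> D \<longrightarrow> \<sigma> = restr C \<rho>" using bspec[OF a6 h(1)] by simp
    from bspec[OF this h(2)] have "C \<subseteq> D \<longrightarrow> \<sigma> = restr C \<rho>" by simp
    then show "\<sigma> = restr C \<rho>" using h(3) by simp
  qed
qed

lemma ideal_point:
  assumes P: "consistent_ideal smc star P"
  shows "is_point smc star (ideal_to_point smc P)"
proof -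
  let ?Q = "ideal_to_point smc P"
  have mem: "(C, u) \<in> ?Q \<longleftrightarrow> (\<exists>\<sigma>. (C, \<sigma>) \<in> P \<and> openin (SpecTop smc C) u \<and> \<sigma> \<in> u)" for C u
    by (simp add: ideal_to_point_def)
  have 1: "?Q \<subseteq> site_el smc star"
  proof
    fix x assume "x \<in> ?Q"
    then obtain C u where x: "x = (C, u)" "(C, u) \<in> ?Q" by (cases x) auto
    then obtain \<sigma> where "(C, \<sigma>) \<in> P" "openin (SpecTop smc C) u" using mem by blast
    then show "x \<in> site_el smc star" using x ci_el[OF P] by (simp add: site_el_def)
  qed
  have 2: "?Q \<noteq> {}"
  proof -
    obtain C \<sigma> where cs: "(C, \<sigma>) \<in> P" using ci_ne[OF P] by blast
    then have "\<sigma> \<in> Spec smc C" using ci_el[OF P] by blast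
    moreover have "openin (SpecTop smc C) (Spec smc C)"
      using openin_topspace[of "SpecTop smc C"] by simp
    ultimately have "(C, Spec smc C) \<in> ?Q" using cs mem by blast
    then show ?thesis by blast
  qed
  have 3: "\<forall>x\<in>?Q. \<forall>y\<in>site_el smc star. site_le smc x y \<longrightarrow> y \<in> ?Q"
  proof (intro ballI impI)
    fix x y assume x: "x \<in> ?Q" and y: "y \<in> site_el smc star" and le: "site_le smc x y"
    obtain D v where xx: "x = (D, v)" by (cases x)
    obtain C u where yy: "y = (C, u)" by (cases y)
    obtain \<rho> where r: "(D, \<rho>) \<in> P" "openin (SpecTop smc D) v" "\<rho> \<in> v" using x xx mem by blast
    have C: "C \<in> CA smc star" "openin (SpecTop smc C) u" using y yy by (auto simp: site_el_def)
    have le2: "C \<subseteq> D" "v \<subseteq> {\<sigma> \<in> Spec smc D. restr C \<sigma> \<in> u}" using le xx yy by (auto simp: site_le_def)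
    obtain \<sigma> where s: "(C, \<sigma>) \<in> P" using ci_dc[OF P r(1) C(1) le2(1)] by blast
    have "\<sigma> = restr C \<rho>" using ci_cons[OF P s r(1) le2(1)] .
    then have "\<sigma> \<in> u" using le2(2) r(3) by blast
    then show "y \<in> ?Q" using s C(2) yy mem by blast
  qed
  have 4: "\<forall>x\<in>?Q. \<forall>y\<in>?Q. \<exists>z\<in>?Q. site_le smc z x \<and> site_le smc z y"
  proof (intro ballI)
    fix x y assume x: "x \<in> ?Q" and y: "y \<in> ?Q"
    obtain C u where xx: "x = (C, u)" by (cases x)
    obtain C' u' where yy: "y = (C', u')" by (cases y)
    obtain \<sigma> where s: "(C, \<sigma>) \<in> P" "openin (SpecTop smc C) u" "\<sigma> \<in> u" using x xx mem by blast
    obtain \<sigma>' where s': "(C', \<sigma>') \<in> P" "openin (SpecTop smc C') u'" "\<sigma>' \<in> u'" using y yy mem by blast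
    obtain D \<rho> where d: "(D, \<rho>) \<in> P" "C \<subseteq> D" "C' \<subseteq> D" using ci_dir[OF P s(1) s'(1)] by blast
    have CA: "C \<in> CA smc star" "C' \<in> CA smc star" "\<rho> \<in> Spec smc D"
      using ci_el[OF P] s(1) s'(1) d(1) by blast+
    define w where "w = {f \<in> Spec smc D. restr C f \<in> u} \<inter> {f \<in> Spec smc D. restr C' f \<in> u'}"
    have wo: "openin (SpecTop smc D) w" unfolding w_def
      by (rule openin_Int[OF restr_preimage_open[OF CA(1) d(2) s(2)] restr_preimage_open[OF CA(2) d(3) s'(2)]])
    have "\<rho> \<in> w" unfolding w_def
      using ci_cons[OF P s(1) d(1,2)] ci_cons[OF P s'(1) d(1,3)] s(3) s'(3) CA(3) by simp
    then have "(D, w) \<in> ?Q" using d(1) wo mem by blast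
    moreover have "site_le smc (D, w) x" "site_le smc (D, w) y"
      using d xx yy unfolding site_le_def w_def by auto
    ultimately show "\<exists>z\<in>?Q. site_le smc z x \<and> site_le smc z y" by blast
  qed
  have 5: "\<forall>x\<in>?Q. \<forall>S. S \<subseteq> site_el smc star \<and> covers x S \<longrightarrow> S \<inter> ?Q \<noteq> {}"
  proof (intro ballI allI impI)
    fix x S assume x: "x \<in> ?Q" and S: "S \<subseteq> site_el smc star \<and> covers x S"
    obtain C u where xx: "x = (C, u)" by (cases x)
    obtain \<sigma> where s: "(C, \<sigma>) \<in> P" "openin (SpecTop smc C) u" "\<sigma> \<in> u" using x xx mem by blast
    have "u \<subseteq> \<Union>{v. (C, v) \<in> S}" using S xx by (simp add: covers_def)
    then obtain v where v: "(C, v) \<in> S" "\<sigma> \<in> v" using s(3) by blast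
    then have "openin (SpecTop smc C) v" using S by (auto simp: site_el_def)
    then have "(C, v) \<in> ?Q" using s(1) v(2) mem by blast
    then show "S \<inter> ?Q \<noteq> {}" using v(1) by blast
  qed
  show ?thesis unfolding is_point_def using 1 2 3 4 5 by blast
qed

lemma ideal_round:
  assumes P: "consistent_ideal smc star P"
  shows "point_to_ideal smc star (ideal_to_point smc P) = P"
proof (intro set_eqI iffI)
  fix x assume x: "x \<in> point_to_ideal smc star (ideal_to_point smc P)"
  obtain C \<sigma> where xx: "x = (C, \<sigma>)" by (cases x)
  have h: "(C, Spec smc C) \<in> ideal_to_point smc P" "\<sigma> \<in> Spec smc C"
    "{u. (C, u) \<in> ideal_to_point smc P} = {u. openin (SpecTop smc C) u \<and> \<sigma> \<in> u}"
    using x xx by (auto simp: point_to_ideal_def)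
  obtain \<sigma>' where s': "(C, \<sigma>') \<in> P" using h(1) by (auto simp: ideal_to_point_def)
  have s'S: "\<sigma>' \<in> Spec smc C" using ci_el[OF P s'] by blast
  have "\<sigma>' = \<sigma>"
  proof (rule Spec_eq_by_nbhds[OF s'S h(2)])
    fix u assume "openin (SpecTop smc C) u" "\<sigma> \<in> u"
    then have "(C, u) \<in> ideal_to_point smc P" using h(3) by blast
    then obtain \<sigma>'' where "(C, \<sigma>'') \<in> P" "\<sigma>'' \<in> u" by (auto simp: ideal_to_point_def)
    then show "\<sigma>' \<in> u" using ci_un[OF P s'] by blast
  qed
  then show "x \<in> P" using s' xx by simp
next
  fix x assume x: "x \<in> P"
  obtain C \<sigma> where xx: "x = (C, \<sigma>)" by (cases x)
  have cs: "C \<in> CA smc star" "\<sigma> \<in> Spec smc C" using ci_el[OF P] x xx by blast+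
  have top: "openin (SpecTop smc C) (Spec smc C)"
    using openin_topspace[of "SpecTop smc C"] by simp
  have "(C, Spec smc C) \<in> ideal_to_point smc P"
    using x xx cs top by (auto simp: ideal_to_point_def)
  moreover have "{u. (C, u) \<in> ideal_to_point smc P} = {u. openin (SpecTop smc C) u \<and> \<sigma> \<in> u}"
  proof (intro set_eqI iffI)
    fix u assume "u \<in> {u. (C, u) \<in> ideal_to_point smc P}"
    then obtain \<sigma>'' where "(C, \<sigma>'') \<in> P" "\<sigma>'' \<in> u" "openin (SpecTop smc C) u"
      by (auto simp: ideal_to_point_def)
    then show "u \<in> {u. openin (SpecTop smc C) u \<and> \<sigma> \<in> u}" using ci_un[OF P] x xx by blast
  next
    fix u assume "u \<in> {u. openin (SpecTop smc C) u \<and> \<sigma> \<in> u}"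
    then show "u \<in> {u. (C, u) \<in> ideal_to_point smc P}" using x xx by (auto simp: ideal_to_point_def)
  qed
  ultimately show "x \<in> point_to_ideal smc star (ideal_to_point smc P)"
    using xx cs by (simp add: point_to_ideal_def)
qed


lemma pti_mem:
  "(C, \<sigma>) \<in> point_to_ideal smc star \<tau> \<longleftrightarrow> C \<in> CA smc star \<and> (C, Spec smc C) \<in> \<tau> \<and>
      \<sigma> \<in> Spec smc C \<and> {u. (C, u) \<in> \<tau>} = {u. openin (SpecTop smc C) u \<and> \<sigma> \<in> u}"
  by (simp add: point_to_ideal_def)

lemma pti_ex:
  assumes "is_point smc star \<tau>" "(C, Spec smc C) \<in> \<tau>"
  shows "\<exists>\<sigma>. (C, \<sigma>) \<in> point_to_ideal smc star \<tau>"
  using point_sober[OF assms] point_el(1)[OF assms] assms(2) unfolding pti_mem by blast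

lemma point_filter:
  assumes "is_point smc star \<tau>" "x \<in> \<tau>" "y \<in> \<tau>"
  shows "\<exists>z\<in>\<tau>. site_le smc z x \<and> site_le smc z y"
proof -
  have "\<forall>x\<in>\<tau>. \<forall>y\<in>\<tau>. \<exists>z\<in>\<tau>. site_le smc z x \<and> site_le smc z y"
    using assms(1) unfolding is_point_def by (rule conjunct2[THEN conjunct2, THEN conjunct2, THEN conjunct1])
  then show ?thesis using assms(2,3) by blast
qed

lemma point_ideal:
  assumes T: "is_point smc star \<tau>"
  shows "consistent_ideal smc star (point_to_ideal smc star \<tau>)"
proof -
  let ?P = "point_to_ideal smc star \<tau>"
  have fstI: "C \<in> fst ` ?P" if "(C, \<sigma>) \<in> ?P" for C \<sigma>
    using that by (rule rev_image_eqI) simp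
  have fstE: "(C, Spec smc C) \<in> \<tau>" if Cin: "C \<in> fst ` ?P" for C
  proof -
    obtain y where "y \<in> ?P" "C = fst y" using Cin by blast
    then have "(C, snd y) \<in> ?P" by simp
    then show ?thesis unfolding pti_mem by blast
  qed
  have c1: "\<forall>(C, \<sigma>)\<in>?P. C \<in> CA smc star \<and> \<sigma> \<in> Spec smc C"
    by (auto simp: point_to_ideal_def)
  have c2: "fst ` ?P \<noteq> {}"
  proof -
    obtain x where "x \<in> \<tau>" using T unfolding is_point_def by blast
    moreover obtain C u where "x = (C, u)" by (cases x)
    ultimately have "(C, u) \<in> \<tau>" by simp
    then obtain \<sigma> where "(C, \<sigma>) \<in> ?P" using pti_ex[OF T point_top[OF T]] by blast
    then show ?thesis using fstI by blast
  qed
  have c3: "\<forall>C\<in>fst ` ?P. \<forall>C'\<in>CA smc star. C' \<subseteq> C \<longrightarrow> C' \<in> fst ` ?P"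
  proof (intro ballI impI)
    fix C C' assume C: "C \<in> fst ` ?P" and C': "C' \<in> CA smc star" "C' \<subseteq> C"
    have top: "(C, Spec smc C) \<in> \<tau>" using fstE[OF C] .
    have "Spec smc C \<subseteq> {\<sigma> \<in> Spec smc C. restr C' \<sigma> \<in> Spec smc C'}"
      using restr_Spec[OF C'] by blast
    moreover have "openin (SpecTop smc C') (Spec smc C')"
      using openin_topspace[of "SpecTop smc C'"] by simp
    ultimately have "(C', Spec smc C') \<in> \<tau>" using point_up[OF T top C'(1) _ C'(2)] by blast
    then obtain \<sigma> where "(C', \<sigma>) \<in> ?P" using pti_ex[OF T] by blast
    then show "C' \<in> fst ` ?P" using fstI by blast
  qed
  have c4: "\<forall>C\<in>fst ` ?P. \<forall>C'\<in>fst ` ?P. \<exists>D\<in>fst ` ?P. C \<subseteq> D \<and> C' \<subseteq> D"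
  proof (intro ballI)
    fix C C' assume C: "C \<in> fst ` ?P" and C': "C' \<in> fst ` ?P"
    have t1: "(C, Spec smc C) \<in> \<tau>" by (rule fstE[OF C])
    have t2: "(C', Spec smc C') \<in> \<tau>" by (rule fstE[OF C'])
    obtain z where z: "z \<in> \<tau>" "site_le smc z (C, Spec smc C)" "site_le smc z (C', Spec smc C')"
      using point_filter[OF T t1 t2] by blast
    obtain E w where zz: "z = (E, w)" by (cases z)
    have Ew: "(E, w) \<in> \<tau>" using z(1) zz by simp
    have sub1: "C \<subseteq> E" using z(2) zz by (simp add: site_le_def)
    have sub2: "C' \<subseteq> E" using z(3) zz by (simp add: site_le_def)
    obtain \<rho> where "(E, \<rho>) \<in> ?P" using pti_ex[OF T point_top[OF T Ew]] by blast
    then have "E \<in> fst ` ?P" by (rule fstI)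
    then show "\<exists>D\<in>fst ` ?P. C \<subseteq> D \<and> C' \<subseteq> D" using sub1 sub2 by blast
  qed
  have c5: "\<forall>C \<sigma> \<sigma>'. (C, \<sigma>) \<in> ?P \<and> (C, \<sigma>') \<in> ?P \<longrightarrow> \<sigma> = \<sigma>'"
  proof (intro allI impI)
    fix C \<sigma> \<sigma>' assume h: "(C, \<sigma>) \<in> ?P \<and> (C, \<sigma>') \<in> ?P"
    then have a: "\<sigma> \<in> Spec smc C" "\<sigma>' \<in> Spec smc C"
      "{u. (C, u) \<in> \<tau>} = {u. openin (SpecTop smc C) u \<and> \<sigma> \<in> u}"
      "{u. (C, u) \<in> \<tau>} = {u. openin (SpecTop smc C) u \<and> \<sigma>' \<in> u}"
      unfolding pti_mem by blast+
    show "\<sigma> = \<sigma>'"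
    proof (rule Spec_eq_by_nbhds[OF a(1,2)])
      fix u assume "openin (SpecTop smc C) u" "\<sigma>' \<in> u"
      then have "u \<in> {u. (C, u) \<in> \<tau>}" using a(4) by blast
      then show "\<sigma> \<in> u" using a(3) by blast
    qed
  qed
  have c6: "\<forall>(C, \<sigma>)\<in>?P. \<forall>(D, \<rho>)\<in>?P. C \<subseteq> D \<longrightarrow> \<sigma> = restr C \<rho>"
  proof (intro ballI impI, clarify)
    fix C \<sigma> D \<rho> assume h1: "(C, \<sigma>) \<in> ?P" and h2: "(D, \<rho>) \<in> ?P" and sub: "C \<subseteq> D"
    have a: "C \<in> CA smc star" "\<sigma> \<in> Spec smc C"
      "{u. (C, u) \<in> \<tau>} = {u. openin (SpecTop smc C) u \<and> \<sigma> \<in> u}"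
      using h1 unfolding pti_mem by blast+
    have b: "\<rho> \<in> Spec smc D" "(D, Spec smc D) \<in> \<tau>"
      "{u. (D, u) \<in> \<tau>} = {u. openin (SpecTop smc D) u \<and> \<rho> \<in> u}"
      using h2 unfolding pti_mem by blast+
    have rS: "restr C \<rho> \<in> Spec smc C" using restr_Spec[OF a(1) sub b(1)] .
    show "\<sigma> = restr C \<rho>"
    proof (rule Spec_eq_by_nbhds[OF a(2) rS])
      fix u assume u: "openin (SpecTop smc C) u" "restr C \<rho> \<in> u"
      let ?w = "{f \<in> Spec smc D. restr C f \<in> u}"
      have "openin (SpecTop smc D) ?w" using restr_preimage_open[OF a(1) sub u(1)] .
      moreover have "\<rho> \<in> ?w" using b(1) u(2) by simp
      ultimately have "?w \<in> {u. (D, u) \<in> \<tau>}" using b(3) by blast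
      then have "(D, ?w) \<in> \<tau>" by simp
      then have "(C, u) \<in> \<tau>" using point_up[OF T _ a(1) u(1) sub] by blast
      then show "\<sigma> \<in> u" using a(3) by blast
    qed
  qed
  show ?thesis unfolding consistent_ideal_def by (intro conjI c1 c2 c3 c4 c5 c6)
qed

lemma point_round:
  assumes T: "is_point smc star \<tau>"
  shows "ideal_to_point smc (point_to_ideal smc star \<tau>) = \<tau>"
proof (intro set_eqI iffI)
  fix x assume x: "x \<in> ideal_to_point smc (point_to_ideal smc star \<tau>)"
  obtain C u where xx: "x = (C, u)" by (cases x)
  obtain \<sigma> where s: "(C, \<sigma>) \<in> point_to_ideal smc star \<tau>" "openin (SpecTop smc C) u" "\<sigma> \<in> u"
    using x xx by (auto simp: ideal_to_point_def)
  have "{u. (C, u) \<in> \<tau>} = {u. openin (SpecTop smc C) u \<and> \<sigma> \<in> u}" using s(1) unfolding pti_mem by blast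
  then have "u \<in> {u. (C, u) \<in> \<tau>}" using s(2,3) by blast
  then show "x \<in> \<tau>" using xx by simp
next
  fix x assume x: "x \<in> \<tau>"
  obtain C u where xx: "x = (C, u)" by (cases x)
  have Cu: "(C, u) \<in> \<tau>" using x xx by simp
  obtain \<sigma> where s: "(C, \<sigma>) \<in> point_to_ideal smc star \<tau>"
    using pti_ex[OF T point_top[OF T Cu]] by blast
  have "{u. (C, u) \<in> \<tau>} = {u. openin (SpecTop smc C) u \<and> \<sigma> \<in> u}" using s unfolding pti_mem by blast
  then have "openin (SpecTop smc C) u" "\<sigma> \<in> u" using Cu by blast+
  then show "x \<in> ideal_to_point smc (point_to_ideal smc star \<tau>)"
    using s xx by (auto simp: ideal_to_point_def)
qed

theorem theorem4p3:
  fixes smc :: "complex \<Rightarrow> 'a::{real_normed_algebra,ring_1,banach} \<Rightarrow> 'a"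
    and star :: "'a \<Rightarrow> 'a"
  assumes "cstar_alg smc star"
  shows "(\<forall>\<tau>. is_point smc star \<tau> \<longrightarrow>
            (\<forall>C\<in>CA smc star. (C, Spec smc C) \<in> \<tau> \<longrightarrow>
               (\<exists>!\<sigma>. \<sigma> \<in> Spec smc C \<and>
                   {u. (C, u) \<in> \<tau>} = {u. openin (SpecTop smc C) u \<and> \<sigma> \<in> u})))
       \<and> bij_betw (point_to_ideal smc star)
           {\<tau>. is_point smc star \<tau>} {P. consistent_ideal smc star P}
       \<and> (\<forall>P. consistent_ideal smc star P \<longrightarrow>
            is_point smc star (ideal_to_point smc P) \<and>
            point_to_ideal smc star (ideal_to_point smc P) = P)"
proof (intro conjI allI impI ballI)
  fix \<tau> C assume T: "is_point smc star \<tau>" and C: "C \<in> CA smc star" and top: "(C, Spec smc C) \<in> \<tau>"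
  obtain \<sigma> where s: "\<sigma> \<in> Spec smc C" "{u. (C, u) \<in> \<tau>} = {u. openin (SpecTop smc C) u \<and> \<sigma> \<in> u}"
    using point_sober[OF T top] by blast
  show "\<exists>!\<sigma>. \<sigma> \<in> Spec smc C \<and>
                   {u. (C, u) \<in> \<tau>} = {u. openin (SpecTop smc C) u \<and> \<sigma> \<in> u}"
  proof (rule ex1I[of _ \<sigma>])
    show "\<sigma> \<in> Spec smc C \<and> {u. (C, u) \<in> \<tau>} = {u. openin (SpecTop smc C) u \<and> \<sigma> \<in> u}"
      using s by blast
  next
    fix \<sigma>' assume h: "\<sigma>' \<in> Spec smc C \<and> {u. (C, u) \<in> \<tau>} = {u. openin (SpecTop smc C) u \<and> \<sigma>' \<in> u}"
    show "\<sigma>' = \<sigma>"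
    proof (rule Spec_eq_by_nbhds)
      show "\<sigma>' \<in> Spec smc C" "\<sigma> \<in> Spec smc C" using h s by blast+
      fix u assume "openin (SpecTop smc C) u" "\<sigma> \<in> u"
      then have "u \<in> {u. (C, u) \<in> \<tau>}" using s(2) by blast
      then show "\<sigma>' \<in> u" using h by blast
    qed
  qed
next
  show "bij_betw (point_to_ideal smc star) {\<tau>. is_point smc star \<tau>} {P. consistent_ideal smc star P}"
  proof (rule bij_betw_byWitness[where f' = "ideal_to_point smc"])
    show "\<forall>a\<in>{\<tau>. is_point smc star \<tau>}. ideal_to_point smc (point_to_ideal smc star a) = a"
      using point_round by blast
    show "\<forall>a'\<in>{P. consistent_ideal smc star P}. point_to_ideal smc star (ideal_to_point smc a') = a'"
      using ideal_round by blast
    show "point_to_ideal smc star ` {\<tau>. is_point smc star \<tau>} \<subseteq> {P. consistent_ideal smc star P}"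
      using point_ideal by blast
    show "ideal_to_point smc ` {P. consistent_ideal smc star P} \<subseteq> {\<tau>. is_point smc star \<tau>}"
      using ideal_point by blast
  qed
next
  fix P assume "consistent_ideal smc star P"
  then show "is_point smc star (ideal_to_point smc P)" by (rule ideal_point)
next
  fix P assume "consistent_ideal smc star P"
  then show "point_to_ideal smc star (ideal_to_point smc P) = P" by (rule ideal_round)
qed

end
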